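(* Let $\overline{G}_n=\overline{H}_0\overline{H}_1\cdots\overline{H}_{n-1}$ be a polyphenyl hexagonal chain with $n$ hexagons and $G_n=H_0H_1\cdots H_{n-1}$ its hexagonal squeeze. Then $$25\,W(\overline{G}_n)=36\,W(G_n)+150n^3-270n^2-177n.$$
   Context: The Wiener index is $W(G)=\sum_{\{u,v\}\subseteq V(G)}d_G(u,v)$, $d_G$ the shortest-path distance. A polyphenyl hexagonal chain $\overline{G}_n=\overline{H}_0\cdots\overline{H}_{n-1}$ of length $n$ consists of pairwise vertex-disjoint hexagons (6-cycles) $\overline{H}_0,\dots,\overline{H}_{n-1}$ together with cut-edges: $\overline{G}_1=\overline{H}_0$, and for $k\ge1$, $\overline{G}_{k+1}$ is obtained from $\overline{G}_k$ by adding $\overline{H}_k$ and a cut-edge joining a vertex $c_k$ of $\overline{H}_k$ to a vertex $t_k$ of $\overline{H}_{k-1}$, where for $k\ge2$, $t_k\ne c_{k-1}$. The hexagonal squeeze of $\overline{G}_n$ is the graph $G_n$ obtained by contracting every cut-edge $c_kt_k$ into a single vertex; it is a spiro hexagonal chain, i.e. a connected graph whose blocks are $n$ hexagons $H_0,\dots,H_{n-1}$, consecutive hexagons $H_{k-1},H_k$ sharing one cut-vertex, each cut-vertex shared by exactly two hexagons and each hexagon having at most two cut-vertices. *)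

theory Defs
  imports Main
begin

definition is_walk :: "('a \<Rightarrow> 'a \<Rightarrow> bool) \<Rightarrow> 'a list \<Rightarrow> bool" where
  "is_walk E xs \<longleftrightarrow> xs \<noteq> [] \<and> (\<forall>i. Suc i < length xs \<longrightarrow> E (xs ! i) (xs ! Suc i))"

definition gdist :: "('a \<Rightarrow> 'a \<Rightarrow> bool) \<Rightarrow> 'a \<Rightarrow> 'a \<Rightarrow> nat" where
  "gdist E u v = (LEAST k. \<exists>xs. is_walk E xs \<and> hd xs = u \<and> last xs = v \<and> length xs = Suc k)"

text \<open>Wiener index: sum of distances over unordered pairs of vertices, i.e. half the
  sum over ordered pairs (distances are symmetric and d(u,u)=0).\<close>
definition wiener :: "'a set \<Rightarrow> ('a \<Rightarrow> 'a \<Rightarrow> bool) \<Rightarrow> nat" where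
  "wiener V E = (\<Sum>u\<in>V. \<Sum>v\<in>V. gdist E u v) div 2"

text \<open>Hexagon H_k has vertices (k,0),...,(k,5), in cyclic order.\<close>
definition hex_vertices :: "nat \<Rightarrow> (nat \<times> nat) set" where
  "hex_vertices n = {(k, i). k < n \<and> i < 6}"

definition hex_adj :: "nat \<Rightarrow> nat \<times> nat \<Rightarrow> nat \<times> nat \<Rightarrow> bool" where
  "hex_adj n x y \<longleftrightarrow> fst x = fst y \<and> fst x < n \<and> snd x < 6 \<and> snd y < 6 \<and>
     (snd y = (snd x + 1) mod 6 \<or> snd x = (snd y + 1) mod 6)"

text \<open>Cut edge c_k t_k joins vertex (k, c k) of H_k to vertex (k-1, t k) of H_{k-1}, 1 \<le> k < n.\<close>
definition cut_adj :: "nat \<Rightarrow> (nat \<Rightarrow> nat) \<Rightarrow> (nat \<Rightarrow> nat) \<Rightarrow> nat \<times> nat \<Rightarrow> nat \<times> nat \<Rightarrow> bool" where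
  "cut_adj n c t x y \<longleftrightarrow> (\<exists>k. 1 \<le> k \<and> k < n \<and>
     ((x = (k, c k) \<and> y = (k - 1, t k)) \<or> (y = (k, c k) \<and> x = (k - 1, t k))))"

definition poly_adj :: "nat \<Rightarrow> (nat \<Rightarrow> nat) \<Rightarrow> (nat \<Rightarrow> nat) \<Rightarrow> nat \<times> nat \<Rightarrow> nat \<times> nat \<Rightarrow> bool" where
  "poly_adj n c t x y \<longleftrightarrow> hex_adj n x y \<or> cut_adj n c t x y"

definition polyphenyl_chain :: "nat \<Rightarrow> (nat \<Rightarrow> nat) \<Rightarrow> (nat \<Rightarrow> nat) \<Rightarrow> bool" where
  "polyphenyl_chain n c t \<longleftrightarrow> n \<ge> 1 \<and>
     (\<forall>k. 1 \<le> k \<and> k < n \<longrightarrow> c k < 6 \<and> t k < 6) \<and>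
     (\<forall>k. 2 \<le> k \<and> k < n \<longrightarrow> t k \<noteq> c (k - 1))"

text \<open>Contraction of every cut edge: vertex (k, c k) is identified with (k-1, t k).\<close>
definition squeeze_map :: "nat \<Rightarrow> (nat \<Rightarrow> nat) \<Rightarrow> (nat \<Rightarrow> nat) \<Rightarrow> nat \<times> nat \<Rightarrow> nat \<times> nat" where
  "squeeze_map n c t x = (if 1 \<le> fst x \<and> fst x < n \<and> snd x = c (fst x)
                          then (fst x - 1, t (fst x)) else x)"

definition squeeze_vertices :: "nat \<Rightarrow> (nat \<Rightarrow> nat) \<Rightarrow> (nat \<Rightarrow> nat) \<Rightarrow> (nat \<times> nat) set" where
  "squeeze_vertices n c t = squeeze_map n c t ` hex_vertices n"

definition squeeze_adj :: "nat \<Rightarrow> (nat \<Rightarrow> nat) \<Rightarrow> (nat \<Rightarrow> nat) \<Rightarrow> nat \<times> nat \<Rightarrow> nat \<times> nat \<Rightarrow> bool" where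
  "squeeze_adj n c t x y \<longleftrightarrow>
     (\<exists>a b. hex_adj n a b \<and> squeeze_map n c t a = x \<and> squeeze_map n c t b = y)"

end

theory Submission
  imports Defs
begin

definition hd6 :: "nat \<Rightarrow> nat \<Rightarrow> nat" where
  "hd6 i j = (let d = (if i \<le> j then j - i else i - j) in min d (6 - d))"

lemma all6: "(\<forall>i::nat<6. P i) \<longleftrightarrow> P 0 \<and> P 1 \<and> P 2 \<and> P 3 \<and> P 4 \<and> P 5"
  by (simp add: numeral_eq_Suc All_less_Suc conj_ac)
lemma ex6: "(\<exists>i::nat<6. P i) \<longleftrightarrow> P 0 \<or> P 1 \<or> P 2 \<or> P 3 \<or> P 4 \<or> P 5"
  by (simp add: numeral_eq_Suc Ex_less_Suc disj_ac)

lemma hd6_sym: "hd6 i j = hd6 j i" unfolding hd6_def Let_def by auto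
lemma hd6_refl[simp]: "hd6 i i = 0" unfolding hd6_def by simp

lemma hd6_adj0: "\<forall>i<6. \<forall>j<6. \<forall>j'<6. (j' = Suc j mod 6 \<or> j = Suc j' mod 6)
   \<longrightarrow> hd6 i j' \<le> hd6 i j + 1"
  unfolding all6 by (simp add: hd6_def)

lemma hd6_adj: "i < 6 \<Longrightarrow> j < 6 \<Longrightarrow> j' < 6 \<Longrightarrow> (j' = Suc j mod 6 \<or> j = Suc j' mod 6)
   \<Longrightarrow> hd6 i j' \<le> hd6 i j + 1"
  using hd6_adj0 by blast

lemma hd6_desc0: "\<forall>e<6. \<forall>j<6. e \<noteq> j \<longrightarrow>
   (\<exists>j'<6. (j = Suc j' mod 6 \<or> j' = Suc j mod 6) \<and> hd6 e j' + 1 = hd6 e j)"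
  unfolding all6 ex6 by (simp add: hd6_def)

lemma hd6_desc: "e < 6 \<Longrightarrow> j < 6 \<Longrightarrow> e \<noteq> j \<Longrightarrow>
   \<exists>j'<6. (j = Suc j' mod 6 \<or> j' = Suc j mod 6) \<and> hd6 e j' + 1 = hd6 e j"
  using hd6_desc0 by blast

lemma sum6: "(\<Sum>j<6::nat. f j) = f 0 + f 1 + f 2 + f 3 + f 4 + (f 5 :: nat)"
  by (simp add: numeral_eq_Suc)

lemma hd6_sum0: "\<forall>e<6. (\<Sum>j<6. hd6 e j) = 9"
  unfolding sum6 all6 by (simp add: hd6_def)
lemma hd6_sum: "e < 6 \<Longrightarrow> (\<Sum>j<6. hd6 e j) = 9"
  using hd6_sum0 by blast
lemma hd6_sum': "e < 6 \<Longrightarrow> (\<Sum>j<6. hd6 j e) = 9"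
  using hd6_sum[of e] by (simp add: hd6_sym[of _ e])

lemma hd6_sum2: "(\<Sum>j<6. \<Sum>j'<6. hd6 j j') = 54"
  unfolding sum6 by (simp add: hd6_def)

lemma sum6m: "(e::nat) < 6 \<Longrightarrow> (\<Sum>j\<in>{..<6}-{e}. f j) + f e = (\<Sum>j<6. f j :: nat)"
  by (simp add: sum.remove add.commute)

lemma hd6_sum2m0: "\<forall>e<6. (\<Sum>j<6. \<Sum>j'<6. hd6 j j') = (\<Sum>j<6. hd6 j e) + (\<Sum>j<6. hd6 e j) + 36"
  unfolding sum6 all6 by (simp add: hd6_def)

lemma hd6_sum2m: "e < 6 \<Longrightarrow> (\<Sum>j\<in>{..<6}-{e}. \<Sum>j'\<in>{..<6}-{e}. hd6 j j') = 36"
proof -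
  assume e: "e < 6"
  have 1: "(\<Sum>j\<in>{..<6}-{e}. \<Sum>j'\<in>{..<6}-{e}. hd6 j j') + (\<Sum>j'\<in>{..<6}-{e}. hd6 e j')
      = (\<Sum>j<6. \<Sum>j'\<in>{..<6}-{e}. hd6 j j')"
    using sum6m[OF e, of "\<lambda>j. \<Sum>j'\<in>{..<6}-{e}. hd6 j j'"] by simp
  have 2: "\<And>j. (\<Sum>j'\<in>{..<6}-{e}. hd6 j j') + hd6 j e = (\<Sum>j'<6. hd6 j j')"
    using sum6m[OF e] by simp
  have 3: "(\<Sum>j'\<in>{..<6}-{e}. hd6 e j') = 9"
    using 2[of e] hd6_sum[OF e] by simp
  have 4: "(\<Sum>j<6. \<Sum>j'\<in>{..<6}-{e}. hd6 j j') + (\<Sum>j<6. hd6 j e) = 54"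
    using 2 hd6_sum2 by (simp add: sum.distrib[symmetric])
  show ?thesis using 1 3 4 hd6_sum'[OF e] by simp
qed

lemma walk_lower:
  assumes step: "\<And>x y. E x y \<Longrightarrow> f y \<le> f x + (1::nat)" and fu: "f u = 0"
    and w: "is_walk E xs" "hd xs = u"
  shows "f (last xs) + 1 \<le> length xs"
proof -
  have "\<forall>i. i < length xs \<longrightarrow> f (xs ! i) \<le> i"
  proof (intro allI)
    fix i show "i < length xs \<longrightarrow> f (xs ! i) \<le> i"
    proof (induction i)
      case 0 then show ?case using w fu by (cases xs) auto
    next
      case (Suc i)
      show ?case
      proof
        assume "Suc i < length xs"
        then have "E (xs ! i) (xs ! Suc i)" using w unfolding is_walk_def by auto
        then show "f (xs ! Suc i) \<le> Suc i" using Suc step[of "xs ! i" "xs ! Suc i"] \<open>Suc i < length xs\<close> by auto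
      qed
    qed
  qed
  moreover have "xs \<noteq> []" using w unfolding is_walk_def by auto
  ultimately have "f (xs ! (length xs - 1)) \<le> length xs - 1" by simp
  moreover have "last xs = xs ! (length xs - 1)" using \<open>xs \<noteq> []\<close> by (simp add: last_conv_nth)
  ultimately show ?thesis using \<open>xs \<noteq> []\<close> by (cases xs) auto
qed

lemma walk_snoc: "is_walk E xs \<Longrightarrow> E (last xs) y \<Longrightarrow> is_walk E (xs @ [y])"
  unfolding is_walk_def
  apply (auto simp: nth_append last_conv_nth less_Suc_eq)
  by (metis diff_Suc_1')

lemma walk_exists:
  assumes desc: "\<And>v. v \<in> V \<Longrightarrow> v \<noteq> u \<Longrightarrow> \<exists>y\<in>V. E y v \<and> f y + 1 = (f v::nat)"
    and fu: "f u = 0"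
  shows "v \<in> V \<Longrightarrow> \<exists>xs. is_walk E xs \<and> hd xs = u \<and> last xs = v \<and> length xs = Suc (f v)"
proof (induction "f v" arbitrary: v rule: less_induct)
  case less
  show ?case
  proof (cases "v = u")
    case True
    then show ?thesis using fu by (intro exI[of _ "[u]"]) (auto simp: is_walk_def)
  next
    case False
    then obtain y where y: "y \<in> V" "E y v" "f y + 1 = f v" using desc less.prems by blast
    then obtain xs where xs: "is_walk E xs" "hd xs = u" "last xs = y" "length xs = Suc (f y)"
      using less.hyps[of y] by auto
    show ?thesis using xs y walk_snoc[of E xs v]
      by (intro exI[of _ "xs @ [v]"]) (auto simp: hd_append)
  qed
qed

lemma gdist_char:
  assumes step: "\<And>x y. E x y \<Longrightarrow> f y \<le> f x + (1::nat)" and fu: "f u = 0"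
    and desc: "\<And>v. v \<in> V \<Longrightarrow> v \<noteq> u \<Longrightarrow> \<exists>y\<in>V. E y v \<and> f y + 1 = f v"
    and v: "v \<in> V"
  shows "gdist E u v = f v"
  unfolding gdist_def
proof (rule Least_equality)
  show "\<exists>xs. is_walk E xs \<and> hd xs = u \<and> last xs = v \<and> length xs = Suc (f v)"
    using walk_exists[OF desc fu v] by blast
next
  fix k assume "\<exists>xs. is_walk E xs \<and> hd xs = u \<and> last xs = v \<and> length xs = Suc k"
  then obtain xs where "is_walk E xs" "hd xs = u" "last xs = v" "length xs = Suc k" by blast
  then show "f v \<le> k" using walk_lower[of E f u xs, OF step fu] by auto
qed

definition aa :: "(nat \<Rightarrow> nat) \<Rightarrow> (nat \<Rightarrow> nat) \<Rightarrow> nat \<Rightarrow> nat" where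
  "aa c t m = hd6 (c m) (t (Suc m))"
definition AA :: "(nat \<Rightarrow> nat) \<Rightarrow> (nat \<Rightarrow> nat) \<Rightarrow> nat \<Rightarrow> nat \<Rightarrow> nat" where
  "AA c t k l = (\<Sum>m\<in>{Suc k..<l}. aa c t m)"

definition Dw :: "nat \<Rightarrow> (nat \<Rightarrow> nat) \<Rightarrow> (nat \<Rightarrow> nat) \<Rightarrow> nat \<times> nat \<Rightarrow> nat \<times> nat \<Rightarrow> nat" where
  "Dw w c t u v = (if fst u < fst v then hd6 (snd u) (t (Suc (fst u))) + AA c t (fst u) (fst v) + hd6 (c (fst v)) (snd v) + w * (fst v - fst u)
     else if fst v < fst u then hd6 (snd v) (t (Suc (fst v))) + AA c t (fst v) (fst u) + hd6 (c (fst u)) (snd u) + w * (fst u - fst v)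
     else hd6 (snd u) (snd v))"

lemma Dw_pair: "Dw w c t (k,i) (l,j) = (if k < l then hd6 i (t (Suc k)) + AA c t k l + hd6 (c l) j + w * (l - k)
     else if l < k then hd6 j (t (Suc l)) + AA c t l k + hd6 (c k) i + w * (k - l)
     else hd6 i j)"
  by (simp add: Dw_def)

lemma Dw_w: "Dw w c t u v = Dw 0 c t u v + w * (if fst u < fst v then fst v - fst u else fst u - fst v)"
  by (simp add: Dw_def)

lemma AA_Suc0[simp]: "AA c t k (Suc k) = 0" by (simp add: AA_def)
lemma AA_Suc: "k < l \<Longrightarrow> AA c t k (Suc l) = AA c t k l + aa c t l" by (simp add: AA_def)
lemma AA_Suc': "Suc k < l \<Longrightarrow> AA c t k l = aa c t (Suc k) + AA c t (Suc k) l"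
  by (simp add: AA_def sum.atLeast_Suc_lessThan)

lemma cut1: "k < Suc m \<Longrightarrow> Dw w c t (k,i) (Suc m, c (Suc m)) = Dw w c t (k,i) (m, t (Suc m)) + w"
  by (cases "k = m") (auto simp: Dw_pair AA_Suc aa_def hd6_sym Suc_diff_le mult_Suc_right)

lemma cut2: "Suc m \<le> k \<Longrightarrow> Dw w c t (k,i) (m, t (Suc m)) = Dw w c t (k,i) (Suc m, c (Suc m)) + w"
  using Suc_diff_Suc[of m k] mult_Suc_right[of w "k - Suc m"] by (cases "k = Suc m") (auto simp: Dw_pair AA_Suc' aa_def hd6_sym Suc_diff_le mult_Suc_right)

definition okct :: "nat \<Rightarrow> (nat \<Rightarrow> nat) \<Rightarrow> (nat \<Rightarrow> nat) \<Rightarrow> bool" where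
  "okct n c t \<longleftrightarrow> (\<forall>k. 1 \<le> k \<and> k < n \<longrightarrow> c k < 6 \<and> t k < 6)"

lemma hex_edge:
  assumes "hex_adj n x y" "fst u < n" "snd u < 6" "okct n c t"
  shows "Dw w c t u y \<le> Dw w c t u x + 1"
proof -
  obtain k i where u: "u = (k,i)" by fastforce
  obtain l j where x: "x = (l,j)" by fastforce
  obtain j' where y: "y = (l,j')" using assms(1) x unfolding hex_adj_def by (cases y) auto
  have jj: "j < 6" "j' < 6" "l < n" "j' = Suc j mod 6 \<or> j = Suc j' mod 6"
    using assms(1) unfolding x y hex_adj_def by auto
  consider "k < l" | "l < k" | "k = l" by linarith
  then show ?thesis
  proof cases
    case 1
    then have "c l < 6" using assms jj unfolding okct_def by auto
    then show ?thesis using 1 hd6_adj[of "c l" j j'] jj by (simp add: u x y Dw_pair)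
  next
    case 2
    then have "t (Suc l) < 6" using assms jj unfolding okct_def u by auto
    then show ?thesis using 2 hd6_adj[of "t (Suc l)" j j'] jj by (simp add: u x y Dw_pair hd6_sym)
  next
    case 3
    then show ?thesis using hd6_adj[of i j j'] jj assms(3) by (simp add: u x y Dw_pair)
  qed
qed

lemma poly_desc:
  assumes "u \<in> hex_vertices n" "x \<in> hex_vertices n" "x \<noteq> u" "okct n c t"
  shows "\<exists>y. poly_adj n c t y x \<and> Dw 1 c t u y + 1 = Dw 1 c t u x"
proof -
  obtain k i where u: "u = (k,i)" by fastforce
  obtain l j where x: "x = (l,j)" by fastforce
  have b: "k < n" "i < 6" "l < n" "j < 6" using assms unfolding u x hex_vertices_def by auto
  consider "k < l" | "l < k" | "k = l" by linarith
  then show ?thesis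
  proof cases
    case 1
    have e: "c l < 6" using assms b 1 unfolding okct_def by auto
    show ?thesis
    proof (cases "j = c l")
      case True
      obtain m where m: "l = Suc m" using 1 by (cases l) auto
      have "cut_adj n c t (m, t l) x" unfolding cut_adj_def x True using b m
        by (intro exI[of _ l]) auto
      then show ?thesis using cut1[of k m 1 c t i] 1 m True
        by (intro exI[of _ "(m, t l)"]) (auto simp: poly_adj_def u x)
    next
      case False
      then obtain j' where j': "j' < 6" "j = Suc j' mod 6 \<or> j' = Suc j mod 6" "hd6 (c l) j' + 1 = hd6 (c l) j"
        using hd6_desc[OF e b(4)] by metis
      have "hex_adj n (l,j') x" using j' b unfolding hex_adj_def x by auto
      then show ?thesis using j' 1 by (intro exI[of _ "(l,j')"]) (auto simp: poly_adj_def u x Dw_pair)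
    qed
  next
    case 2
    have e: "t (Suc l) < 6" using assms b 2 unfolding okct_def by auto
    show ?thesis
    proof (cases "j = t (Suc l)")
      case True
      have "cut_adj n c t (Suc l, c (Suc l)) x" unfolding cut_adj_def x True using b 2
        by (intro exI[of _ "Suc l"]) auto
      then show ?thesis using cut2[of l k 1 c t i] 2 True
        by (intro exI[of _ "(Suc l, c (Suc l))"]) (auto simp: poly_adj_def u x)
    next
      case False
      then obtain j' where j': "j' < 6" "j = Suc j' mod 6 \<or> j' = Suc j mod 6" "hd6 (t (Suc l)) j' + 1 = hd6 (t (Suc l)) j"
        using hd6_desc[OF e b(4)] by metis
      have "hex_adj n (l,j') x" using j' b unfolding hex_adj_def x by auto
      then show ?thesis using j' 2 by (intro exI[of _ "(l,j')"]) (auto simp: poly_adj_def u x Dw_pair hd6_sym)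
    qed
  next
    case 3
    then have "i \<noteq> j" using assms(3) u x by auto
    then obtain j' where j': "j' < 6" "j = Suc j' mod 6 \<or> j' = Suc j mod 6" "hd6 i j' + 1 = hd6 i j"
      using hd6_desc[OF b(2) b(4)] by metis
    have "hex_adj n (l,j') x" using j' b unfolding hex_adj_def x by auto
    then show ?thesis using j' 3 by (intro exI[of _ "(l,j')"]) (auto simp: poly_adj_def u x Dw_pair)
  qed
qed

lemma poly_step:
  assumes "poly_adj n c t x y" "u \<in> hex_vertices n" "okct n c t"
  shows "Dw 1 c t u y \<le> Dw 1 c t u x + 1"
proof -
  obtain k i where u: "u = (k,i)" by fastforce
  have b: "k < n" "i < 6" using assms unfolding u hex_vertices_def by auto
  show ?thesis
  proof (cases "hex_adj n x y")
    case True then show ?thesis using hex_edge[OF True _ _ assms(3), of u] b u by auto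
  next
    case False
    then obtain m where m: "1 \<le> m" "m < n" "(x = (m, c m) \<and> y = (m - 1, t m)) \<or> (y = (m, c m) \<and> x = (m - 1, t m))"
      using assms(1) unfolding poly_adj_def cut_adj_def by auto
    obtain m' where m': "m = Suc m'" using m by (cases m) auto
    show ?thesis
    proof (cases "k < m")
      case True then show ?thesis using cut1[of k m' 1 c t i] m m' u by auto
    next
      case False then show ?thesis using cut2[of m' k 1 c t i] m m' u by auto
    qed
  qed
qed

lemma chain_ok: "polyphenyl_chain n c t \<Longrightarrow> okct n c t"
  unfolding polyphenyl_chain_def okct_def by auto

lemma sq_hex: "polyphenyl_chain n c t \<Longrightarrow> a \<in> hex_vertices n \<Longrightarrow> squeeze_map n c t a \<in> hex_vertices n"
  unfolding polyphenyl_chain_def squeeze_map_def hex_vertices_def by auto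

lemma sq_idem: "polyphenyl_chain n c t \<Longrightarrow> a \<in> hex_vertices n \<Longrightarrow> squeeze_map n c t (squeeze_map n c t a) = squeeze_map n c t a"
  unfolding polyphenyl_chain_def squeeze_map_def hex_vertices_def
  by (cases a) (auto simp: le_diff_conv2)

lemma sq_Dw: "Dw 0 c t u (squeeze_map n c t a) = Dw 0 c t u a"
proof -
  obtain k i where u: "u = (k,i)" by fastforce
  obtain m j where a: "a = (m,j)" by fastforce
  show ?thesis
  proof (cases "1 \<le> m \<and> m < n \<and> j = c m")
    case True
    then obtain m' where m': "m = Suc m'" by (cases m) auto
    show ?thesis
    proof (cases "k < m")
      case True2: True
      show ?thesis using cut1[of k m' 0 c t i] True True2 m' u a by (simp add: squeeze_map_def)
    next
      case False
      show ?thesis using cut2[of m' k 0 c t i] True False m' u a by (simp add: squeeze_map_def)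
    qed
  next
    case False then show ?thesis unfolding squeeze_map_def a by auto
  qed
qed

lemma cut_sq: "polyphenyl_chain n c t \<Longrightarrow> cut_adj n c t y x \<Longrightarrow> squeeze_map n c t y = squeeze_map n c t x"
  unfolding polyphenyl_chain_def squeeze_map_def cut_adj_def
  by (auto simp: le_diff_conv2)

lemma cut_hex: "polyphenyl_chain n c t \<Longrightarrow> cut_adj n c t y x \<Longrightarrow> y \<in> hex_vertices n"
  unfolding polyphenyl_chain_def cut_adj_def hex_vertices_def by auto

lemma sq_desc:
  assumes ch: "polyphenyl_chain n c t" and u: "u \<in> hex_vertices n" "squeeze_map n c t u = u"
  shows "x \<in> hex_vertices n \<Longrightarrow> squeeze_map n c t x \<noteq> u \<Longrightarrow>
    \<exists>a b. hex_adj n a b \<and> squeeze_map n c t b = squeeze_map n c t x \<and> Dw 0 c t u a + 1 = Dw 0 c t u x"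
proof (induction "Dw 1 c t u x" arbitrary: x rule: less_induct)
  case less
  have "x \<noteq> u" using less.prems u by auto
  then obtain y where y: "poly_adj n c t y x" "Dw 1 c t u y + 1 = Dw 1 c t u x"
    using poly_desc[OF u(1) less.prems(1) _ chain_ok[OF ch]] by blast
  show ?case
  proof (cases "hex_adj n y x")
    case True
    then have "fst y = fst x" unfolding hex_adj_def by auto
    then have "Dw 1 c t u y = Dw 0 c t u y + (if fst u < fst x then fst x - fst u else fst u - fst x)"
      using Dw_w[of 1 c t u y] by simp
    then have "Dw 0 c t u y + 1 = Dw 0 c t u x" using y(2) Dw_w[of 1 c t u x] by linarith
    then show ?thesis using True by blast
  next
    case False
    then have cy: "cut_adj n c t y x" using y(1) unfolding poly_adj_def by auto
    have e: "squeeze_map n c t y = squeeze_map n c t x" using cut_sq[OF ch cy] .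
    have "Dw 0 c t u y = Dw 0 c t u x" using sq_Dw[of c t u n y] sq_Dw[of c t u n x] e by simp
    then show ?thesis using less.hyps[of y] y(2) e cut_hex[OF ch cy] less.prems by auto
  qed
qed

lemma gd_poly:
  assumes ch: "polyphenyl_chain n c t" and uv: "u \<in> hex_vertices n" "v \<in> hex_vertices n"
  shows "gdist (poly_adj n c t) u v = Dw 1 c t u v"
proof (rule gdist_char[where V = "hex_vertices n"])
  show "\<And>x y. poly_adj n c t x y \<Longrightarrow> Dw 1 c t u y \<le> Dw 1 c t u x + 1"
    using poly_step[OF _ uv(1) chain_ok[OF ch]] by blast
  show "Dw 1 c t u u = 0" by (simp add: Dw_def)
  show "\<And>v. v \<in> hex_vertices n \<Longrightarrow> v \<noteq> u \<Longrightarrow> \<exists>y\<in>hex_vertices n. poly_adj n c t y v \<and> Dw 1 c t u y + 1 = Dw 1 c t u v"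
  proof -
    fix v assume v: "v \<in> hex_vertices n" "v \<noteq> u"
    then obtain y where y: "poly_adj n c t y v" "Dw 1 c t u y + 1 = Dw 1 c t u v"
      using poly_desc[OF uv(1) v(1) v(2) chain_ok[OF ch]] by blast
    have "y \<in> hex_vertices n"
    proof (cases "hex_adj n y v")
      case True then show ?thesis unfolding hex_adj_def hex_vertices_def by (cases y) auto
    next
      case False then show ?thesis using y(1) cut_hex[OF ch] unfolding poly_adj_def by blast
    qed
    then show "\<exists>y\<in>hex_vertices n. poly_adj n c t y v \<and> Dw 1 c t u y + 1 = Dw 1 c t u v" using y by blast
  qed
  show "v \<in> hex_vertices n" by fact
qed

lemma gd_sq:
  assumes ch: "polyphenyl_chain n c t" and uv: "u \<in> squeeze_vertices n c t" "v \<in> squeeze_vertices n c t"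
  shows "gdist (squeeze_adj n c t) u v = Dw 0 c t u v"
proof -
  obtain u0 where u0: "u0 \<in> hex_vertices n" "u = squeeze_map n c t u0" using uv(1) unfolding squeeze_vertices_def by auto
  have uh: "u \<in> hex_vertices n" using sq_hex[OF ch u0(1)] u0 by simp
  have us: "squeeze_map n c t u = u" using sq_idem[OF ch u0(1)] u0 by simp
  show ?thesis
  proof (rule gdist_char[where V = "squeeze_vertices n c t"])
    show "\<And>x y. squeeze_adj n c t x y \<Longrightarrow> Dw 0 c t u y \<le> Dw 0 c t u x + 1"
    proof -
      fix x y assume "squeeze_adj n c t x y"
      then obtain a b where ab: "hex_adj n a b" "x = squeeze_map n c t a" "y = squeeze_map n c t b"
        unfolding squeeze_adj_def by auto
      have "Dw 0 c t u b \<le> Dw 0 c t u a + 1"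
        using hex_edge[OF ab(1) _ _ chain_ok[OF ch], of u] uh unfolding hex_vertices_def by auto
      then show "Dw 0 c t u y \<le> Dw 0 c t u x + 1" using ab sq_Dw by metis
    qed
    show "Dw 0 c t u u = 0" by (simp add: Dw_def)
    show "\<And>v. v \<in> squeeze_vertices n c t \<Longrightarrow> v \<noteq> u \<Longrightarrow>
        \<exists>y\<in>squeeze_vertices n c t. squeeze_adj n c t y v \<and> Dw 0 c t u y + 1 = Dw 0 c t u v"
    proof -
      fix v assume v: "v \<in> squeeze_vertices n c t" "v \<noteq> u"
      then obtain x where x: "x \<in> hex_vertices n" "v = squeeze_map n c t x" unfolding squeeze_vertices_def by auto
      then obtain a b where ab: "hex_adj n a b" "squeeze_map n c t b = squeeze_map n c t x" "Dw 0 c t u a + 1 = Dw 0 c t u x"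
        using sq_desc[OF ch uh us x(1)] v(2) by auto
      have ah: "a \<in> hex_vertices n" using ab(1) unfolding hex_adj_def hex_vertices_def by (cases a) auto
      have "squeeze_adj n c t (squeeze_map n c t a) v" using ab x unfolding squeeze_adj_def by metis
      moreover have "Dw 0 c t u (squeeze_map n c t a) + 1 = Dw 0 c t u v" using ab x sq_Dw by metis
      moreover have "squeeze_map n c t a \<in> squeeze_vertices n c t" using ah unfolding squeeze_vertices_def by auto
      ultimately show "\<exists>y\<in>squeeze_vertices n c t. squeeze_adj n c t y v \<and> Dw 0 c t u y + 1 = Dw 0 c t u v" by blast
    qed
    show "v \<in> squeeze_vertices n c t" by fact
  qed
qed

definition Vp :: "nat \<Rightarrow> (nat \<Rightarrow> nat) \<Rightarrow> (nat \<times> nat) set" where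
  "Vp n c = {(k,i). k < n \<and> i < 6 \<and> \<not> (1 \<le> k \<and> i = c k)}"

lemma sqV: "polyphenyl_chain n c t \<Longrightarrow> squeeze_vertices n c t = Vp n c"
  unfolding squeeze_vertices_def Vp_def
proof (intro equalityI subsetI)
  fix x assume ch: "polyphenyl_chain n c t" and "x \<in> squeeze_map n c t ` hex_vertices n"
  then obtain a where a: "a \<in> hex_vertices n" "x = squeeze_map n c t a" by auto
  then show "x \<in> {(k, i). k < n \<and> i < 6 \<and> \<not> (1 \<le> k \<and> i = c k)}"
    using ch unfolding polyphenyl_chain_def squeeze_map_def hex_vertices_def
    by (cases a) (auto simp: le_diff_conv2)
next
  fix x assume ch: "polyphenyl_chain n c t" and "x \<in> {(k, i). k < n \<and> i < 6 \<and> \<not> (1 \<le> k \<and> i = c k)}"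
  then have "x \<in> hex_vertices n" "squeeze_map n c t x = x"
    unfolding hex_vertices_def squeeze_map_def by auto
  then show "x \<in> squeeze_map n c t ` hex_vertices n" by force
qed

lemma Dw_sym: "Dw w c t u v = Dw w c t v u"
  by (simp add: Dw_def hd6_sym)

lemma sum_union2:
  assumes "finite A" "finite B" "A \<inter> B = {}" "\<And>u v. f u v = f v u"
  shows "(\<Sum>u\<in>A\<union>B. \<Sum>v\<in>A\<union>B. f u v) = (\<Sum>u\<in>A. \<Sum>v\<in>A. f u v) + 2 * (\<Sum>u\<in>A. \<Sum>v\<in>B. f u v) + (\<Sum>u\<in>B. \<Sum>v\<in>B. (f u v :: nat))"
proof -
  have "(\<Sum>u\<in>A\<union>B. \<Sum>v\<in>A\<union>B. f u v) = (\<Sum>u\<in>A\<union>B. (\<Sum>v\<in>A. f u v) + (\<Sum>v\<in>B. f u v))"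
    using assms by (simp add: sum.union_disjoint)
  also have "\<dots> = (\<Sum>u\<in>A. \<Sum>v\<in>A. f u v) + (\<Sum>u\<in>A. \<Sum>v\<in>B. f u v) + ((\<Sum>u\<in>B. \<Sum>v\<in>A. f u v) + (\<Sum>u\<in>B. \<Sum>v\<in>B. f u v))"
    using assms by (simp add: sum.union_disjoint sum.distrib)
  also have "(\<Sum>u\<in>B. \<Sum>v\<in>A. f u v) = (\<Sum>u\<in>A. \<Sum>v\<in>B. f u v)"
    using sum.swap[of "\<lambda>u v. f u v" B A] assms(4) by simp
  finally show ?thesis by simp
qed

definition S1 where "S1 n c t = (\<Sum>u\<in>hex_vertices n. \<Sum>v\<in>hex_vertices n. Dw 1 c t u v)"
definition S0 where "S0 n c t = (\<Sum>u\<in>Vp n c. \<Sum>v\<in>Vp n c. Dw 0 c t u v)"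
definition BB where "BB n c t = (\<Sum>k<n. AA c t k n)"

lemma hex_Suc: "hex_vertices (Suc n) = hex_vertices n \<union> (\<lambda>j. (n,j)) ` {..<6}"
  unfolding hex_vertices_def by auto
lemma hex_fin: "finite (hex_vertices n)"
proof -
  have "hex_vertices n = {..<n} \<times> {..<6}" unfolding hex_vertices_def by auto
  then show ?thesis by simp
qed
lemma hex_sum: "(\<Sum>u\<in>hex_vertices n. g u) = (\<Sum>k<n. \<Sum>i<6. g (k,i))"
proof -
  have "hex_vertices n = {..<n} \<times> {..<6}" unfolding hex_vertices_def by auto
  then show ?thesis by (simp add: sum.cartesian_product)
qed
lemma img_sum: "(\<Sum>v\<in>(\<lambda>j. (n,j)) ` A. g v) = (\<Sum>j\<in>A. g (n,j))"
  by (simp add: sum.reindex inj_on_def)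

lemma Q1:
  assumes "okct N c t" "1 \<le> n" "n < N"
  shows "(\<Sum>u\<in>hex_vertices n. \<Sum>j<6. Dw 1 c t u (n,j)) = 108 * n + 36 * BB n c t + 36 * (\<Sum>k<n. n - k)"
proof -
  have cn: "c n < 6" using assms unfolding okct_def by auto
  have "\<And>k. k < n \<Longrightarrow> (\<Sum>i<6. \<Sum>j<6. Dw 1 c t (k,i) (n,j)) = 108 + 36 * AA c t k n + 36 * (n - k)"
  proof -
    fix k assume k: "k < n"
    have tk: "t (Suc k) < 6" using assms k unfolding okct_def by auto
    have "(\<Sum>i<6. \<Sum>j<6. Dw 1 c t (k,i) (n,j)) = (\<Sum>i<6. \<Sum>j<6. hd6 i (t (Suc k)) + AA c t k n + hd6 (c n) j + (n - k))"
      using k by (simp add: Dw_pair)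
    also have "\<dots> = 108 + 36 * AA c t k n + 36 * (n - k)"
      by (simp add: sum.distrib hd6_sum[OF cn] hd6_sum'[OF tk] sum_distrib_left[symmetric])
    finally show "(\<Sum>i<6. \<Sum>j<6. Dw 1 c t (k,i) (n,j)) = 108 + 36 * AA c t k n + 36 * (n - k)" .
  qed
  then have "(\<Sum>u\<in>hex_vertices n. \<Sum>j<6. Dw 1 c t u (n,j)) = (\<Sum>k<n. 108 + 36 * AA c t k n + 36 * (n - k))"
    unfolding hex_sum by simp
  also have "\<dots> = 108 * n + 36 * BB n c t + 36 * (\<Sum>k<n. n - k)"
    by (simp add: sum.distrib BB_def sum_distrib_left)
  finally show ?thesis .
qed

lemma St1:
  assumes "okct N c t" "1 \<le> n" "n < N"
  shows "S1 (Suc n) c t = S1 n c t + 2 * (108 * n + 36 * BB n c t + 36 * (\<Sum>k<n. n - k)) + 54"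
proof -
  have d: "hex_vertices n \<inter> (\<lambda>j. (n,j)) ` {..<6} = {}" unfolding hex_vertices_def by auto
  have "S1 (Suc n) c t = S1 n c t + 2 * (\<Sum>u\<in>hex_vertices n. \<Sum>j<6. Dw 1 c t u (n,j)) + (\<Sum>j<6. \<Sum>j'<6. Dw 1 c t (n,j) (n,j'))"
    unfolding S1_def hex_Suc
    by (subst sum_union2[OF hex_fin _ d]) (auto simp: Dw_sym img_sum)
  also have "(\<Sum>j<6. \<Sum>j'<6. Dw 1 c t (n,j) (n,j')) = 54" by (simp add: Dw_pair hd6_sum2)
  finally show ?thesis using Q1[OF assms] by simp
qed

definition Hk :: "(nat \<Rightarrow> nat) \<Rightarrow> nat \<Rightarrow> nat set" where
  "Hk c k = (if k = 0 then {..<6} else {..<6} - {c k})"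

lemma Vp_Sigma: "Vp n c = Sigma {..<n} (Hk c)"
  unfolding Vp_def Hk_def by (auto split: if_splits)

lemma Vp_fin: "finite (Vp n c)"
  unfolding Vp_Sigma Hk_def by auto

lemma Vp_sum: "(\<Sum>u\<in>Vp n c. g u) = (\<Sum>k<n. \<Sum>i\<in>Hk c k. g (k,i))"
  unfolding Vp_Sigma by (subst sum.Sigma) (auto simp: Hk_def)

lemma Vp_Suc: "1 \<le> n \<Longrightarrow> Vp (Suc n) c = Vp n c \<union> (\<lambda>j. (n,j)) ` ({..<6} - {c n})"
  unfolding Vp_def by (auto simp: less_Suc_eq)

lemma hd6_summ: "e < 6 \<Longrightarrow> (\<Sum>j\<in>{..<6}-{e}. hd6 e j) = 9"
  using sum6m[of e "hd6 e"] hd6_sum[of e] by simp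
lemma hd6_summ': "e < 6 \<Longrightarrow> x < 6 \<Longrightarrow> (\<Sum>j\<in>{..<6}-{e}. hd6 j x) + hd6 e x = 9"
  using sum6m[of e "\<lambda>j. hd6 j x"] hd6_sum'[of x] by simp

lemma card5: "(e::nat) < 6 \<Longrightarrow> card ({..<6} - {e}) = 5" by simp

lemma Q0:
  assumes "okct N c t" "1 \<le> n" "n < N"
  shows "(\<Sum>u\<in>Vp n c. \<Sum>j\<in>{..<6}-{c n}. Dw 0 c t u (n,j)) = 90 * n + 9 + 25 * BB n c t"
proof -
  have cn: "c n < 6" using assms unfolding okct_def by auto
  define g where "g k = (\<Sum>i\<in>Hk c k. \<Sum>j\<in>{..<6}-{c n}. Dw 0 c t (k,i) (n,j))" for k
  have gk: "\<And>k. k < n \<Longrightarrow> g k = (\<Sum>i\<in>Hk c k. \<Sum>j\<in>{..<6}-{c n}. hd6 i (t (Suc k)) + AA c t k n + hd6 (c n) j)"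
    unfolding g_def by (intro sum.cong refl) (simp add: Dw_pair)
  have tk: "\<And>k. k < n \<Longrightarrow> t (Suc k) < 6" using assms unfolding okct_def by auto
  have g0: "g 0 = 99 + 30 * AA c t 0 n"
    using gk[of 0] assms(2) by (simp add: Hk_def sum.distrib hd6_summ[OF cn] hd6_sum'[OF tk] card5[OF cn]
         sum_distrib_left[symmetric])
  have g1: "\<And>k. k \<in> {Suc 0..<n} \<Longrightarrow> g k + 5 * aa c t k = 90 + 25 * AA c t k n"
  proof -
    fix k assume k: "k \<in> {Suc 0..<n}"
    have ck: "c k < 6" using assms k unfolding okct_def by auto
    have "g k = 5 * (\<Sum>i\<in>{..<6}-{c k}. hd6 i (t (Suc k))) + 25 * AA c t k n + 45"
      using gk[of k] k by (simp add: Hk_def sum.distrib hd6_summ[OF cn] card5[OF cn] card5[OF ck]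
         sum_distrib_left[symmetric])
    then show "g k + 5 * aa c t k = 90 + 25 * AA c t k n"
      using hd6_summ'[OF ck tk[of k]] k by (simp add: aa_def)
  qed
  have "(\<Sum>k\<in>{Suc 0..<n}. g k + 5 * aa c t k) = (\<Sum>k\<in>{Suc 0..<n}. 90 + 25 * AA c t k n)"
    using g1 by (rule sum.cong[OF refl])
  then have e1: "(\<Sum>k\<in>{Suc 0..<n}. g k) + 5 * AA c t 0 n = 90 * (n - 1) + 25 * (\<Sum>k\<in>{Suc 0..<n}. AA c t k n)"
    by (simp add: sum.distrib sum_distrib_left AA_def)
  have split: "\<And>h. (\<Sum>k<n. h k) = h 0 + (\<Sum>k\<in>{Suc 0..<n}. h k :: nat)"
    using assms(2) by (metis One_nat_def Suc_le_eq atLeast0LessThan sum.atLeast_Suc_lessThan)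
  have "(\<Sum>u\<in>Vp n c. \<Sum>j\<in>{..<6}-{c n}. Dw 0 c t u (n,j)) = (\<Sum>k<n. g k)"
    unfolding Vp_sum g_def ..
  also have "\<dots> = 90 * n + 9 + 25 * BB n c t"
    using split[of g] split[of "\<lambda>k. AA c t k n"] e1 g0 assms(2) unfolding BB_def by simp
  finally show ?thesis .
qed

lemma St0:
  assumes "okct N c t" "1 \<le> n" "n < N"
  shows "S0 (Suc n) c t = S0 n c t + 2 * (90 * n + 9 + 25 * BB n c t) + 36"
proof -
  have cn: "c n < 6" using assms unfolding okct_def by auto
  have d: "Vp n c \<inter> (\<lambda>j. (n,j)) ` ({..<6} - {c n}) = {}" unfolding Vp_def by auto
  have "S0 (Suc n) c t = S0 n c t + 2 * (\<Sum>u\<in>Vp n c. \<Sum>j\<in>{..<6}-{c n}. Dw 0 c t u (n,j))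
        + (\<Sum>j\<in>{..<6}-{c n}. \<Sum>j'\<in>{..<6}-{c n}. Dw 0 c t (n,j) (n,j'))"
    unfolding S0_def Vp_Suc[OF assms(2)]
    by (subst sum_union2[OF Vp_fin _ d]) (auto simp: Dw_sym img_sum)
  also have "(\<Sum>j\<in>{..<6}-{c n}. \<Sum>j'\<in>{..<6}-{c n}. Dw 0 c t (n,j) (n,j')) = 36"
    by (simp add: Dw_pair hd6_sum2m[OF cn])
  finally show ?thesis using Q0[OF assms] by simp
qed

lemma tri: "2 * (\<Sum>k<n. n - k) = n * (n + 1::nat)"
proof (induction n)
  case 0 then show ?case by simp
next
  case (Suc n)
  have "(\<Sum>k<Suc n. Suc n - k) = (\<Sum>k<n. Suc (n - k)) + 1"
    by (simp add: Suc_diff_le)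
  also have "\<dots> = (\<Sum>k<n. (n - k) + 1) + 1" by simp
  also have "\<dots> = (\<Sum>k<n. n - k) + n + 1" by (simp only: sum.distrib) simp
  finally show ?case using Suc by simp
qed

lemma base1: "S1 1 c t = 54" "S0 1 c t = 54"
proof -
  have h: "hex_vertices 1 = (\<lambda>j. (0,j)) ` {..<6}" unfolding hex_vertices_def by auto
  have v: "Vp 1 c = (\<lambda>j. (0,j)) ` {..<6}" unfolding Vp_def by auto
  show "S1 1 c t = 54" unfolding S1_def h img_sum by (simp add: Dw_pair hd6_sum2)
  show "S0 1 c t = 54" unfolding S0_def v img_sum by (simp add: Dw_pair hd6_sum2)
qed

lemma main_id:
  assumes ok: "okct N c t"
  shows "1 \<le> n \<Longrightarrow> n \<le> N \<Longrightarrow> 25 * int (S1 n c t) = 36 * int (S0 n c t) + 2 * (150 * int n ^ 3 - 270 * int n ^ 2 - 177 * int n)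
     \<and> even (S1 n c t) \<and> even (S0 n c t)"
proof (induction n rule: nat_induct_at_least)
  case base then show ?case using base1[of c t] by simp
next
  case (Suc n)
  have n: "1 \<le> n" "n < N" using Suc by auto
  note IH = Suc.IH[OF less_imp_le[OF n(2)]]
  have e1: "int (S1 (Suc n) c t) = int (S1 n c t) + 2 * (108 * int n + 36 * int (BB n c t) + 36 * int (\<Sum>k<n. n - k)) + 54"
    using St1[OF ok n] by simp
  have e0: "int (S0 (Suc n) c t) = int (S0 n c t) + 2 * (90 * int n + 9 + 25 * int (BB n c t)) + 36"
    using St0[OF ok n] by simp
  have tr: "2 * int (\<Sum>k<n. n - k) = int n * (int n + 1)" using tri[of n]
    by (metis of_nat_1 of_nat_add of_nat_mult of_nat_numeral)
  have "25 * int (S1 (Suc n) c t) = 36 * int (S0 (Suc n) c t) + 2 * (150 * int (Suc n) ^ 3 - 270 * int (Suc n) ^ 2 - 177 * int (Suc n))"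
    unfolding e1 e0 using IH tr by (simp add: algebra_simps power3_eq_cube power2_eq_square)
  moreover have "even (S1 (Suc n) c t)" "even (S0 (Suc n) c t)" using IH St1[OF ok n] St0[OF ok n] by auto
  ultimately show ?case by simp
qed

theorem theorem4p1:
  fixes n :: nat and c t :: "nat \<Rightarrow> nat"
  assumes "polyphenyl_chain n c t"
  shows "25 * int (wiener (hex_vertices n) (poly_adj n c t)) =
         36 * int (wiener (squeeze_vertices n c t) (squeeze_adj n c t))
         + 150 * int n ^ 3 - 270 * int n ^ 2 - 177 * int n"
proof -
  have ok: "okct n c t" using chain_ok[OF assms] .
  have n1: "1 \<le> n" using assms unfolding polyphenyl_chain_def by auto
  have w1: "wiener (hex_vertices n) (poly_adj n c t) = S1 n c t div 2"
    unfolding wiener_def S1_def using gd_poly[OF assms] by (simp cong: sum.cong)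
  have w0: "wiener (squeeze_vertices n c t) (squeeze_adj n c t) = S0 n c t div 2"
  proof -
    have "(\<Sum>u\<in>squeeze_vertices n c t. \<Sum>v\<in>squeeze_vertices n c t. gdist (squeeze_adj n c t) u v)
        = (\<Sum>u\<in>squeeze_vertices n c t. \<Sum>v\<in>squeeze_vertices n c t. Dw 0 c t u v)"
      using gd_sq[OF assms] by (simp cong: sum.cong)
    then show ?thesis unfolding wiener_def S0_def sqV[OF assms] by simp
  qed
  have M: "25 * int (S1 n c t) = 36 * int (S0 n c t) + 2 * (150 * int n ^ 3 - 270 * int n ^ 2 - 177 * int n)"
    "even (S1 n c t)" "even (S0 n c t)" using main_id[OF ok n1 order_refl] by auto
  have a: "int (S1 n c t) = 2 * int (S1 n c t div 2)" "int (S0 n c t) = 2 * int (S0 n c t div 2)"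
    using M(2,3) by (metis dvd_mult_div_cancel of_nat_mult of_nat_numeral)+
  define P where "P = 150 * int n ^ 3 - 270 * int n ^ 2 - 177 * int n"
  define x where "x = int (S1 n c t div 2)"
  define y where "y = int (S0 n c t div 2)"
  have "2 * (25 * x) = 2 * (36 * y + P)" using M(1) a unfolding x_def y_def P_def by simp
  then have "25 * x = 36 * y + P" by simp
  then show ?thesis unfolding w1 w0 x_def y_def P_def by simp
qed

end
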